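(* Let $K$ be any finite index subgroup of $F_2$, and suppose that $K$ contains an element of odd length. Then there is an $N$ such that for every $n\geq N$, $K$ contains an element of length $n$.
   Context: $F_2$ is the free group on $a,b$, $\Xi=\{a,b,a^{-1},b^{-1}\}$, and an element has length $n$ if its reduced word $x_1\cdots x_n$ ($x_i\in\Xi$, $x_{i+1}\neq x_i^{-1}$) has $n$ letters. *)

theory Defs
  imports "HOL-Algebra.Coset"
begin

text \<open>A letter is a pair (g, e) with g a generator and e = True meaning the inverse g^-1.
  So the alphabet Xi = {a, b, a^-1, b^-1} is the type gen \<times> bool.\<close>

datatype gen = Ga | Gb

type_synonym letter = "gen \<times> bool"

definition inv_letter :: "letter \<Rightarrow> letter" where
  "inv_letter x = (fst x, \<not> snd x)"

definition reduced :: "letter list \<Rightarrow> bool" where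
  "reduced w \<longleftrightarrow> (\<forall>i. Suc i < length w \<longrightarrow> w ! Suc i \<noteq> inv_letter (w ! i))"

fun cons_red :: "letter \<Rightarrow> letter list \<Rightarrow> letter list" where
  "cons_red x [] = [x]"
| "cons_red x (y # ys) = (if y = inv_letter x then ys else x # y # ys)"

definition reduce :: "letter list \<Rightarrow> letter list" where
  "reduce w = foldr cons_red w []"

definition F2 :: "letter list monoid" where
  "F2 = \<lparr> carrier = {w. reduced w}, mult = (\<lambda>u v. reduce (u @ v)), one = [] \<rparr>"

definition word_length :: "letter list \<Rightarrow> nat" where
  "word_length w = length w"

end

theory Submission
  imports Defs
begin

lemma inv_inv[simp]: "inv_letter (inv_letter x) = x"
  by (simp add: inv_letter_def)

lemma inv_neq[simp]: "inv_letter x \<noteq> x" "x \<noteq> inv_letter x"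
  by (auto simp: inv_letter_def prod_eq_iff)

lemma reduced_Nil[simp]: "reduced []" by (simp add: reduced_def)

lemma reduced_Cons:
  "reduced (x # xs) \<longleftrightarrow> reduced xs \<and> (xs = [] \<or> hd xs \<noteq> inv_letter x)"
proof
  assume r: "reduced (x # xs)"
  have "reduced xs" unfolding reduced_def
  proof (intro allI impI)
    fix i assume "Suc i < length xs"
    thus "xs ! Suc i \<noteq> inv_letter (xs ! i)" using r[unfolded reduced_def, rule_format, of "Suc i"] by simp
  qed
  moreover have "xs = [] \<or> hd xs \<noteq> inv_letter x"
    using r[unfolded reduced_def, rule_format, of 0] by (cases xs) auto
  ultimately show "reduced xs \<and> (xs = [] \<or> hd xs \<noteq> inv_letter x)" by blast
next
  assume h: "reduced xs \<and> (xs = [] \<or> hd xs \<noteq> inv_letter x)"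
  show "reduced (x # xs)" unfolding reduced_def
  proof (intro allI impI)
    fix i assume i: "Suc i < length (x # xs)"
    show "(x # xs) ! Suc i \<noteq> inv_letter ((x # xs) ! i)"
    proof (cases i)
      case 0 thus ?thesis using h i by (cases xs) auto
    next
      case (Suc j) thus ?thesis using h i unfolding reduced_def by auto
    qed
  qed
qed

lemma reduced_append:
  "reduced (u @ v) \<longleftrightarrow> reduced u \<and> reduced v \<and> (u = [] \<or> v = [] \<or> hd v \<noteq> inv_letter (last u))"
  by (induction u) (auto simp: reduced_Cons)

lemma reduced_replicate: "reduced (replicate n x)"
  by (induction n) (auto simp: reduced_Cons)

lemma cons_red_reduced: "reduced ys \<Longrightarrow> reduced (cons_red x ys)"
  by (cases ys) (auto simp: reduced_Cons)

lemma reduce_reduced: "reduced (reduce w)"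
  unfolding reduce_def by (induction w) (auto intro: cons_red_reduced)

lemma foldr_reduced: "reduced z \<Longrightarrow> reduced (foldr cons_red w z)"
  by (induction w) (auto intro: cons_red_reduced)

lemma reduce_id: "reduced w \<Longrightarrow> reduce w = w"
  unfolding reduce_def
proof (induction w)
  case (Cons x xs)
  hence "foldr cons_red xs [] = xs" by (simp add: reduced_Cons)
  thus ?case using Cons.prems by (cases xs) (auto simp: reduced_Cons)
qed simp

lemma cancel: "reduced ys \<Longrightarrow> cons_red x (cons_red (inv_letter x) ys) = ys"
proof (cases ys)
  case (Cons y ys')
  assume r: "reduced ys"
  show ?thesis
  proof (cases "y = x")
    case True thus ?thesis using r Cons by (cases ys') (auto simp: reduced_Cons)
  qed (use Cons in auto)
qed simp

lemma foldr_reduce: "reduced z \<Longrightarrow> foldr cons_red (reduce x) z = foldr cons_red x z"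
proof (induction x)
  case Nil thus ?case by (simp add: reduce_def)
next
  case (Cons x xs)
  note IH = Cons.IH note pr = Cons.prems
  have rd: "reduce (x # xs) = cons_red x (reduce xs)" by (simp add: reduce_def)
  show ?case
  proof (cases "reduce xs")
    case Nil thus ?thesis using IH pr rd by simp
  next
    case (Cons y r')
    note Cons2 = this
    show ?thesis
    proof (cases "y = inv_letter x")
      case True
      have "reduced (reduce xs)" by (rule reduce_reduced)
      hence rr: "reduced r'" using Cons2 by (simp add: reduced_Cons)
      have "foldr cons_red xs z = foldr cons_red (reduce xs) z" using IH pr by simp
      also have "\<dots> = cons_red (inv_letter x) (foldr cons_red r' z)" using Cons2 True by simp
      finally have "foldr cons_red (x#xs) z = foldr cons_red r' z"
        using cancel[OF foldr_reduced[OF pr, of r']] by simp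
      thus ?thesis using rd Cons2 True by simp
    next
      case False
      thus ?thesis using rd Cons2 IH pr by simp
    qed
  qed
qed

lemma reduce_append: "reduce (u @ v) = foldr cons_red u (reduce v)"
  by (simp add: reduce_def)

lemma F2_mult: "x \<otimes>\<^bsub>F2\<^esub> y = reduce (x @ y)" by (simp add: F2_def)
lemma F2_carrier: "carrier F2 = {w. reduced w}" by (simp add: F2_def)
lemma F2_one: "\<one>\<^bsub>F2\<^esub> = []" by (simp add: F2_def)

lemma reduce_left: "reduce (reduce u @ v) = reduce (u @ v)"
proof -
  have "reduce (reduce u @ v) = foldr cons_red (reduce u) (reduce v)" by (rule reduce_append)
  also have "\<dots> = foldr cons_red u (reduce v)" by (rule foldr_reduce[OF reduce_reduced])
  also have "\<dots> = reduce (u @ v)" by (rule reduce_append[symmetric])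
  finally show ?thesis .
qed

lemma reduce_assoc1: "reduce (reduce (u @ v) @ w) = reduce (u @ v @ w)"
  using reduce_left[of "u @ v" w] by simp

lemma reduce_assoc2: "reduce (u @ reduce (v @ w)) = reduce (u @ v @ w)"
proof -
  have "reduce (u @ reduce (v @ w)) = foldr cons_red u (reduce (reduce (v @ w)))" by (rule reduce_append)
  also have "\<dots> = foldr cons_red u (reduce (v @ w))" by (simp only: reduce_id[OF reduce_reduced])
  also have "\<dots> = foldr cons_red u (foldr cons_red v (reduce w))" by (simp only: reduce_append)
  also have "\<dots> = reduce (u @ v @ w)" by (simp add: reduce_append)
  finally show ?thesis .
qed

lemma linv: "reduce (rev (map inv_letter u) @ u) = []"
proof (induction u)
  case (Cons x xs)
  have "reduce (rev (map inv_letter (x#xs)) @ (x#xs)) =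
     foldr cons_red (rev (map inv_letter xs)) (cons_red (inv_letter x) (cons_red x (reduce xs)))"
    by (simp add: reduce_append reduce_def)
  also have "\<dots> = foldr cons_red (rev (map inv_letter xs)) (reduce xs)"
    using cancel[OF reduce_reduced, of "inv_letter x" xs] by simp
  also have "\<dots> = []" using Cons by (simp add: reduce_append)
  finally show ?case .
qed (simp add: reduce_def)

lemma group_F2: "group F2"
proof (rule groupI)
  fix x assume x: "x \<in> carrier F2"
  show "\<exists>y\<in>carrier F2. y \<otimes>\<^bsub>F2\<^esub> x = \<one>\<^bsub>F2\<^esub>"
    by (rule bexI[of _ "reduce (rev (map inv_letter x))"])
       (auto simp: F2_mult F2_one F2_carrier reduce_reduced reduce_left linv)
qed (auto simp: F2_mult F2_one F2_carrier reduce_reduced reduce_assoc1 reduce_assoc2 reduce_id)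

lemma F2_inv: "x \<in> carrier F2 \<Longrightarrow> inv\<^bsub>F2\<^esub> x = reduce (rev (map inv_letter x))"
  by (rule group.inv_equality[OF group_F2])
     (auto simp: F2_mult F2_one F2_carrier reduce_reduced reduce_left linv)

lemma F2_pow: "[A] [^]\<^bsub>F2\<^esub> (n::nat) = replicate n A"
proof (induction n)
  case 0 thus ?case by (simp add: F2_one)
next
  case (Suc n)
  have "[A] [^]\<^bsub>F2\<^esub> Suc n = reduce (replicate n A @ [A])" by (simp add: Suc F2_mult)
  also have "replicate n A @ [A] = replicate (Suc n) A" by (simp add: replicate_append_same)
  finally show ?case using reduce_id[OF reduced_replicate[of "Suc n" A]] by simp
qed

lemma (in group) inv_cancel_aux:
  "g \<in> carrier G \<Longrightarrow> y \<in> carrier G \<Longrightarrow> inv g \<otimes> (g \<otimes> y) = y"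
  by (simp add: m_assoc[symmetric])

lemma (in group) conj_pow:
  assumes "g \<in> carrier G" "x \<in> carrier G"
  shows "(g \<otimes> x \<otimes> inv g) [^] (n::nat) = g \<otimes> x [^] n \<otimes> inv g"
proof (induction n)
  case 0 thus ?case using assms by simp
next
  case (Suc n)
  have "(g \<otimes> x \<otimes> inv g) [^] Suc n = (g \<otimes> x [^] n \<otimes> inv g) \<otimes> (g \<otimes> x \<otimes> inv g)"
    using Suc by simp
  also have "\<dots> = g \<otimes> x [^] n \<otimes> (inv g \<otimes> g) \<otimes> x \<otimes> inv g"
    using assms by (simp add: m_assoc inv_cancel_aux)
  also have "\<dots> = g \<otimes> x [^] n \<otimes> x \<otimes> inv g"
    using assms by simp
  also have "\<dots> = g \<otimes> x [^] Suc n \<otimes> inv g"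
    using assms by (simp add: m_assoc)
  finally show ?case .
qed

lemma (in group) sub_pow:
  assumes "subgroup K G" "h \<in> K"
  shows "h [^] (n::nat) \<in> K"
proof (induction n)
  case 0 thus ?case using assms by (simp add: subgroup.one_closed)
next
  case (Suc n) thus ?case using assms by (simp add: subgroup.m_closed)
qed

lemma (in group) pigeon:
  assumes K: "subgroup K G" and fin: "finite (rcosets K)" and c: "c \<in> carrier G"
  shows "\<exists>k. 1 \<le> k \<and> k \<le> card (rcosets K) \<and> c [^] k \<in> K"
proof -
  define m where "m = card (rcosets K)"
  define f where "f i = K #> c [^] (i::nat)" for i
  have sub: "K \<subseteq> carrier G" using K by (rule subgroup.subset)
  have "f ` {0..m} \<subseteq> rcosets K" unfolding f_def using sub c by (auto intro: rcosetsI)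
  hence "card (f ` {0..m}) \<le> m" using card_mono[OF fin] m_def by auto
  hence "\<not> inj_on f {0..m}" by (intro pigeonhole) simp
  then obtain i j where ij: "i \<in> {0..m}" "j \<in> {0..m}" "i \<noteq> j" "f i = f j"
    unfolding inj_on_def by blast
  have "\<exists>i j. i < j \<and> j \<le> m \<and> f i = f j"
  proof (cases "i < j")
    case True thus ?thesis using ij by auto
  next
    case False thus ?thesis using ij by (intro exI[of _ j] exI[of _ i]) auto
  qed
  then obtain i j where ij: "i < j" "j \<le> m" "f i = f j" by blast
  have "c [^] j \<in> K #> c [^] i"
    using ij(3) repr_independenceD[OF K, of "c [^] j" "c [^] i"] c unfolding f_def by simp
  hence "c [^] j \<otimes> inv (c [^] i) \<in> K"
    using subgroup.rcos_module_imp[OF K is_group, of "c [^] i"] c by simp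
  moreover have "c [^] j = c [^] (j - i) \<otimes> c [^] i"
    using nat_pow_mult[OF c, of "j - i" i] ij by simp
  ultimately have "c [^] (j - i) \<in> K" using c by (simp add: m_assoc)
  thus ?thesis using ij unfolding m_def by (intro exI[of _ "j - i"]) auto
qed

lemma (in group) conj_in:
  assumes K: "subgroup K G" and fin: "finite (rcosets K)"
    and g: "g \<in> carrier G" and x: "x \<in> carrier G"
  shows "g \<otimes> x [^] (2 * fact (card (rcosets K)) :: nat) \<otimes> inv g \<in> K"
proof -
  let ?c = "g \<otimes> x \<otimes> inv g"
  have c: "?c \<in> carrier G" using g x by simp
  obtain k where k: "1 \<le> k" "k \<le> card (rcosets K)" "?c [^] k \<in> K"
    using pigeon[OF K fin c] by blast
  have "k dvd fact (card (rcosets K))" using k by (intro dvd_fact) auto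
  then obtain q where q: "2 * fact (card (rcosets K)) = k * (2 * q)"
    by (auto elim!: dvdE)
  have "(?c [^] k) [^] (2 * q) \<in> K" by (rule sub_pow[OF K k(3)])
  hence "?c [^] (k * (2 * q)) \<in> K" by (simp only: nat_pow_pow[OF c])
  hence "?c [^] (2 * fact (card (rcosets K)) :: nat) \<in> K" by (simp only: q)
  thus ?thesis using conj_pow[OF g x] by simp
qed

definition hw :: "nat \<Rightarrow> nat \<Rightarrow> letter \<Rightarrow> letter list" where
  "hw D j y = replicate j y @ replicate D (Ga, False) @ replicate j (inv_letter y)"

lemma hw_r1:
  assumes "fst y = Gb" "0 < D"
  shows "reduced (replicate j y @ replicate D (Ga, False))"
proof -
  have c1: "j = 0 \<or> D = 0 \<or> hd (replicate D (Ga, False)) \<noteq> inv_letter (last (replicate j y))"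
    using assms by (cases "j = 0") (auto simp: inv_letter_def prod_eq_iff)
  show ?thesis
    using c1 by (simp only: reduced_append reduced_replicate simp_thms) auto
qed

lemma hw_reduced:
  assumes "fst y = Gb" "0 < D"
  shows "reduced (hw D j y)"
proof -
  have yA: "(Ga, False) \<noteq> inv_letter y" "inv_letter y \<noteq> inv_letter (Ga, False)"
    using assms by (auto simp: inv_letter_def prod_eq_iff)
  have c1: "j = 0 \<or> D = 0 \<or> hd (replicate D (Ga, False)) \<noteq> inv_letter (last (replicate j y))"
    using yA assms by (cases "j = 0") (auto simp: inv_letter_def prod_eq_iff)
  have r1: "reduced (replicate j y @ replicate D (Ga, False))"
    using c1 by (simp only: reduced_append reduced_replicate simp_thms) auto
  have c2: "replicate j y @ replicate D (Ga, False) = [] \<or> j = 0 \<or>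
     hd (replicate j (inv_letter y)) \<noteq> inv_letter (last (replicate j y @ replicate D (Ga, False)))"
    using yA assms by (cases "j = 0") auto
  have "reduced ((replicate j y @ replicate D (Ga, False)) @ replicate j (inv_letter y))"
    using r1 c2 by (simp only: reduced_append[of "replicate j y @ replicate D (Ga, False)"] reduced_replicate simp_thms)
       (auto simp: reduced_append reduced_replicate)
  thus ?thesis by (simp add: hw_def)
qed

lemma hw_in:
  assumes K: "subgroup K F2" and fin: "finite (rcosets\<^bsub>F2\<^esub> K)" and y: "fst y = Gb"
  shows "hw (2 * fact (card (rcosets\<^bsub>F2\<^esub> K))) j y \<in> K"
proof -
  interpret G: group F2 by (rule group_F2)
  define D :: nat where "D = 2 * fact (card (rcosets\<^bsub>F2\<^esub> K))"
  have Dpos: "0 < D" by (simp add: D_def)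
  let ?g = "replicate j y"
  have g: "?g \<in> carrier F2" by (simp add: F2_carrier reduced_replicate)
  have a: "[(Ga, False)] \<in> carrier F2" by (simp add: F2_carrier reduced_Cons)
  have "?g \<otimes>\<^bsub>F2\<^esub> [(Ga, False)] [^]\<^bsub>F2\<^esub> D \<otimes>\<^bsub>F2\<^esub> inv\<^bsub>F2\<^esub> ?g \<in> K"
    unfolding D_def by (rule G.conj_in[OF K fin g a])
  moreover have "inv\<^bsub>F2\<^esub> ?g = replicate j (inv_letter y)"
    using F2_inv[OF g] by (simp add: reduce_id reduced_replicate)
  moreover have r1: "reduced (?g @ replicate D (Ga, False))"
    by (rule hw_r1[OF y Dpos])
  ultimately have "reduce (reduce (?g @ replicate D (Ga, False)) @ replicate j (inv_letter y)) \<in> K"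
    by (simp add: F2_pow F2_mult)
  thus ?thesis using hw_reduced[OF y Dpos, of j] r1 unfolding D_def[symmetric] hw_def
    by (simp add: reduce_id)
qed

lemma hw_len: "length (hw D j y) = D + 2 * j"
  by (simp add: hw_def)

theorem lemma5p6:
  fixes K :: "letter list set"
  assumes "subgroup K F2"
    and "finite (rcosets\<^bsub>F2\<^esub> K)"
    and "\<exists>w\<in>K. odd (word_length w)"
  shows "\<exists>N. \<forall>n\<ge>N. \<exists>w\<in>K. word_length w = n"
proof -
  interpret G: group F2 by (rule group_F2)
  define D :: nat where "D = 2 * fact (card (rcosets\<^bsub>F2\<^esub> K))"
  have hK: "fst y = Gb \<Longrightarrow> hw D j y \<in> K" for j y
    unfolding D_def by (rule hw_in[OF assms(1,2)])
  obtain w where w: "w \<in> K" "odd (length w)" using assms(3) by (auto simp: word_length_def)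
  have wr: "reduced w" using w(1) subgroup.subset[OF assms(1)] by (auto simp: F2_carrier)
  have wne: "w \<noteq> []" using w(2) by auto
  have Dev: "even D" unfolding D_def by simp
  have Dpos: "0 < D" by (simp add: D_def)
  show ?thesis
  proof (intro exI allI impI)
    fix n assume n: "length w + D + 2 \<le> n"
    show "\<exists>w\<in>K. word_length w = n"
    proof (cases "even n")
      case True
      define j where "j = (n - D) div 2"
      have "length (hw D j (Gb, False)) = n" using True Dev n unfolding hw_len j_def
        by (auto elim!: evenE)
      thus ?thesis using hK[of "(Gb, False)" j] by (auto simp: word_length_def)
    next
      case False
      define j where "j = (n - length w - D) div 2"
      have j1: "1 \<le> j" using n unfolding j_def by auto
      define y where "y = (if last w = (Gb, True) then (Gb, True) else (Gb, False))"
      have y: "fst y = Gb" by (simp add: y_def)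
      have hd: "hd (hw D j y) = y" using j1 by (cases j) (auto simp: hw_def)
      have hne: "hw D j y \<noteq> []" using j1 by (cases j) (auto simp: hw_def)
      have red: "reduced (w @ hw D j y)"
        using wr hw_reduced[OF y Dpos] hd hne wne
        by (auto simp: reduced_append y_def inv_letter_def prod_eq_iff)
      have "w \<otimes>\<^bsub>F2\<^esub> hw D j y \<in> K"
        using subgroup.m_closed[OF assms(1) w(1) hK[OF y]] .
      hence inK: "w @ hw D j y \<in> K" using red by (simp add: F2_mult reduce_id)
      have "length (w @ hw D j y) = n" using False Dev n w(2) unfolding j_def
        by (auto simp: hw_len elim!: evenE oddE)
      thus ?thesis using inK unfolding word_length_def by blast
    qed
  qed
qed

end
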